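(* Let $t\in[n]$ and let $S\subseteq N$ be a $t$-switchable set (maximal or not) such that $P^{\langle t\rangle}_S$ is an associated prime of $\mathcal{I}^{\langle t\rangle}$. Then $\tilde{\mathcal{I}}^{\langle t\rangle}_S$ is contained in the $P^{\langle t\rangle}_S$-primary component of $\mathcal{I}^{\langle t\rangle}$ (in any primary decomposition of $\mathcal{I}^{\langle t\rangle}$).
   Context: Fix positive integers $n, r_1,\dots,r_n$, let $N=[r_1]\times\cdots\times[r_n]$, and let $R$ be the polynomial ring over a field in the variables $x_a$, $a\in N$. For $a,b\in N$ and $i\in[n]$, ${\rm s}(i,a,b)\in N$ has $i$-th component $b_i$ and other components equal to those of $a$. Let $d(a,b)=\#\{j: a_j\neq b_j\}$ and $f_{i,a,b}=x_ax_b-x_{{\rm s}(i,a,b)}x_{{\rm s}(i,b,a)}$. Let $\mathcal{I}^{\langle t\rangle}=(f_{i,a,b}: a,b\in N,\ d(a,b)=2,\ i\in[t])$. A subset $S\subseteq N$ is $t$-switchable if for all $a,b\in S$ with $d(a,b)=2$ and all $i\in[t]$, ${\rm s}(i,a,b)\in S$. Elements $a,b\in S$ are connected in $S$ if there are $a_0=a,\dots,a_k=b$ in $S$ with $d(a_{j-1},a_j)\le 1$ for all $j$. For $t$-switchable $S$: $\tilde{\mathcal{I}}^{\langle t\rangle}_S=(f_{i,a,b}: i\in[t],\ a,b \text{ connected in } S)$, $\mathrm{Var}^{\langle t\rangle}_S=(x_a: a\notin S)$, $P^{\langle t\rangle}_S=\mathrm{Var}^{\langle t\rangle}_S+\tilde{\mathcal{I}}^{\langle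 t\rangle}_S$. *)

theory Defs
  imports Main "HOL-Library.Poly_Mapping"
begin

text \<open>Points of N = [r_1] x ... x [r_n] are functions nat => nat, with components
indexed by 1..n, values in 1..r_i, and equal to 0 outside 1..n.\<close>

type_synonym pt = "nat \<Rightarrow> nat"

type_synonym 'k mpoly = "(pt \<Rightarrow>\<^sub>0 nat) \<Rightarrow>\<^sub>0 'k"

definition gridN :: "nat \<Rightarrow> (nat \<Rightarrow> nat) \<Rightarrow> pt set" where
  "gridN n r = {a. (\<forall>i\<in>{1..n}. 1 \<le> a i \<and> a i \<le> r i) \<and> (\<forall>i. i \<notin> {1..n} \<longrightarrow> a i = 0)}"

text \<open>The polynomial ring R = k[x_a : a in N], as the subset of polynomials
involving only variables from N.\<close>
definition polyR :: "pt set \<Rightarrow> ('k::field) mpoly set" where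
  "polyR N = {p. \<forall>m\<in>Poly_Mapping.keys p. Poly_Mapping.keys m \<subseteq> N}"

definition var :: "pt \<Rightarrow> ('k::field) mpoly" where
  "var a = Poly_Mapping.single (Poly_Mapping.single a 1) 1"

definition sw :: "nat \<Rightarrow> pt \<Rightarrow> pt \<Rightarrow> pt" where
  "sw i a b = a(i := b i)"

definition dist :: "nat \<Rightarrow> pt \<Rightarrow> pt \<Rightarrow> nat" where
  "dist n a b = card {j\<in>{1..n}. a j \<noteq> b j}"

definition fpol :: "nat \<Rightarrow> pt \<Rightarrow> pt \<Rightarrow> ('k::field) mpoly" where
  "fpol i a b = var a * var b - var (sw i a b) * var (sw i b a)"

definition is_ideal :: "('a::comm_ring_1) set \<Rightarrow> 'a set \<Rightarrow> bool" where
  "is_ideal C I \<longleftrightarrow> I \<subseteq> C \<and> 0 \<in> I \<and> (\<forall>x\<in>I. \<forall>y\<in>I. x + y \<in> I)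
     \<and> (\<forall>c\<in>C. \<forall>x\<in>I. c * x \<in> I)"

definition gen_ideal :: "('a::comm_ring_1) set \<Rightarrow> 'a set \<Rightarrow> 'a set" where
  "gen_ideal C G = \<Inter>{I. is_ideal C I \<and> G \<subseteq> I}"

definition ideal_sum :: "('a::comm_ring_1) set \<Rightarrow> 'a set \<Rightarrow> 'a set \<Rightarrow> 'a set" where
  "ideal_sum C I J = gen_ideal C (I \<union> J)"

definition is_prime_ideal :: "('a::comm_ring_1) set \<Rightarrow> 'a set \<Rightarrow> bool" where
  "is_prime_ideal C P \<longleftrightarrow> is_ideal C P \<and> P \<noteq> C \<and>
     (\<forall>a\<in>C. \<forall>b\<in>C. a * b \<in> P \<longrightarrow> a \<in> P \<or> b \<in> P)"

definition is_primary_ideal :: "('a::comm_ring_1) set \<Rightarrow> 'a set \<Rightarrow> bool" where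
  "is_primary_ideal C Q \<longleftrightarrow> is_ideal C Q \<and> Q \<noteq> C \<and>
     (\<forall>a\<in>C. \<forall>b\<in>C. a * b \<in> Q \<longrightarrow> a \<notin> Q \<longrightarrow> (\<exists>k. b ^ k \<in> Q))"

definition radical :: "('a::comm_ring_1) set \<Rightarrow> 'a set \<Rightarrow> 'a set" where
  "radical C I = {f\<in>C. \<exists>k. f ^ k \<in> I}"

definition associated_prime :: "('a::comm_ring_1) set \<Rightarrow> 'a set \<Rightarrow> 'a set \<Rightarrow> bool" where
  "associated_prime C I P \<longleftrightarrow> is_prime_ideal C P \<and> (\<exists>f\<in>C. P = {g\<in>C. g * f \<in> I})"

definition primary_decomposition :: "('a::comm_ring_1) set \<Rightarrow> 'a set \<Rightarrow> 'a set set \<Rightarrow> bool" where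
  "primary_decomposition C I Qs \<longleftrightarrow> finite Qs \<and> Qs \<noteq> {} \<and>
     (\<forall>Q\<in>Qs. is_primary_ideal C Q) \<and> \<Inter>Qs = I \<and>
     (\<forall>Q\<in>Qs. \<forall>Q'\<in>Qs. radical C Q = radical C Q' \<longrightarrow> Q = Q') \<and>
     (\<forall>Q\<in>Qs. \<Inter>(Qs - {Q}) \<noteq> I)"

definition It :: "nat \<Rightarrow> (nat \<Rightarrow> nat) \<Rightarrow> nat \<Rightarrow> ('k::field) mpoly set" where
  "It n r t = gen_ideal (polyR (gridN n r))
     {fpol i a b | i a b. a \<in> gridN n r \<and> b \<in> gridN n r \<and> dist n a b = 2 \<and> i \<in> {1..t}}"

definition switchable :: "nat \<Rightarrow> (nat \<Rightarrow> nat) \<Rightarrow> nat \<Rightarrow> pt set \<Rightarrow> bool" where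
  "switchable n r t S \<longleftrightarrow> S \<subseteq> gridN n r \<and>
     (\<forall>a\<in>S. \<forall>b\<in>S. \<forall>i\<in>{1..t}. dist n a b = 2 \<longrightarrow> sw i a b \<in> S)"

definition connected_in :: "nat \<Rightarrow> pt set \<Rightarrow> pt \<Rightarrow> pt \<Rightarrow> bool" where
  "connected_in n S a b \<longleftrightarrow> a \<in> S \<and>
     (\<lambda>u v. u \<in> S \<and> v \<in> S \<and> dist n u v \<le> 1)\<^sup>*\<^sup>* a b"

definition Itilde :: "nat \<Rightarrow> (nat \<Rightarrow> nat) \<Rightarrow> nat \<Rightarrow> pt set \<Rightarrow> ('k::field) mpoly set" where
  "Itilde n r t S = gen_ideal (polyR (gridN n r))
     {fpol i a b | i a b. i \<in> {1..t} \<and> connected_in n S a b}"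

definition VarS :: "nat \<Rightarrow> (nat \<Rightarrow> nat) \<Rightarrow> pt set \<Rightarrow> ('k::field) mpoly set" where
  "VarS n r S = gen_ideal (polyR (gridN n r)) {var a | a. a \<in> gridN n r \<and> a \<notin> S}"

definition PS :: "nat \<Rightarrow> (nat \<Rightarrow> nat) \<Rightarrow> nat \<Rightarrow> pt set \<Rightarrow> ('k::field) mpoly set" where
  "PS n r t S = ideal_sum (polyR (gridN n r)) (VarS n r S) (Itilde n r t S)"

end

theory Submission imports Defs begin


definition ev :: "pt set \<Rightarrow> ('k::field) mpoly \<Rightarrow> 'k" where
  "ev S g = (\<Sum>m\<in>Poly_Mapping.keys g. if Poly_Mapping.keys m \<subseteq> S then Poly_Mapping.lookup g m else 0)"

lemma ev_superset:
  assumes "finite A" "Poly_Mapping.keys g \<subseteq> A"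
  shows "ev S g = (\<Sum>m\<in>A. if Poly_Mapping.keys m \<subseteq> S then Poly_Mapping.lookup g m else 0)"
  unfolding ev_def
  by (rule sum.mono_neutral_left) (use assms in \<open>auto simp: in_keys_iff\<close>)

lemma ev_add: "ev S (g + h) = ev S g + ev S h"
proof -
  let ?A = "Poly_Mapping.keys g \<union> Poly_Mapping.keys h"
  have "ev S (g+h) = (\<Sum>m\<in>?A. if Poly_Mapping.keys m \<subseteq> S then Poly_Mapping.lookup (g+h) m else 0)"
    by (rule ev_superset) (use keys_add[of g h] in auto)
  also have "\<dots> = (\<Sum>m\<in>?A. if Poly_Mapping.keys m \<subseteq> S then Poly_Mapping.lookup g m else 0)
     + (\<Sum>m\<in>?A. if Poly_Mapping.keys m \<subseteq> S then Poly_Mapping.lookup h m else 0)"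
    by (simp add: lookup_add sum.distrib[symmetric] if_distrib cong: if_cong)
  also have "\<dots> = ev S g + ev S h"
    by (simp add: ev_superset[of ?A g] ev_superset[of ?A h])
  finally show ?thesis .
qed

lemma ev_zero: "ev S 0 = 0" by (simp add: ev_def)

lemma ev_minus: "ev S (g - h) = ev S g - ev S h"
  using ev_add[of S "g - h" h] by simp

lemma ev_single: "ev S (Poly_Mapping.single m c) = (if Poly_Mapping.keys m \<subseteq> S then c else 0)"
  by (simp add: ev_def)

lemma keys_add_nat: "Poly_Mapping.keys (m1 + m2 :: 'a \<Rightarrow>\<^sub>0 nat) = Poly_Mapping.keys m1 \<union> Poly_Mapping.keys m2"
  by (auto simp: in_keys_iff lookup_add)

lemma update_eq_add:
  assumes "a \<notin> Poly_Mapping.keys f"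
  shows "Poly_Mapping.update a b f = f + Poly_Mapping.single a b"
  using assms by (intro poly_mapping_eqI) (auto simp: lookup_update lookup_add lookup_single in_keys_iff)

lemma ev_mult_single:
  "ev S (Poly_Mapping.single m c * h) = ev S (Poly_Mapping.single m c) * ev S h"
proof (induction h rule: update_induct)
  case const then show ?case by (simp add: ev_zero)
next
  case (update f a b)
  have "ev S (Poly_Mapping.single m c * Poly_Mapping.update a b f)
     = ev S (Poly_Mapping.single m c * f) + ev S (Poly_Mapping.single (m + a) (c * b))"
    using update.hyps by (simp add: update_eq_add distrib_left mult_single ev_add)
  also have "\<dots> = ev S (Poly_Mapping.single m c) * ev S (Poly_Mapping.update a b f)"
    using update.IH update.hyps by (simp add: update_eq_add ev_add ev_single keys_add_nat distrib_left)
  finally show ?case .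
qed

lemma ev_mult: "ev S (g * h) = ev S g * ev S h"
proof (induction g rule: update_induct)
  case const then show ?case by (simp add: ev_zero)
next
  case (update f a b)
  then show ?case
    by (simp add: update_eq_add distrib_right ev_add ev_mult_single)
qed




lemma grid_upd: "a \<in> gridN n r \<Longrightarrow> b \<in> gridN n r \<Longrightarrow> i \<in> {1..n} \<Longrightarrow> a(i := b i) \<in> gridN n r"
  by (auto simp: gridN_def)

lemma grid_out: "a \<in> gridN n r \<Longrightarrow> k \<notin> {1..n} \<Longrightarrow> a k = 0"
  by (auto simp: gridN_def)

lemma dist_sym: "dist n a b = dist n b a"
  unfolding dist_def by (metis)

lemma dist1_eq:
  assumes "a \<in> gridN n r" "a1 \<in> gridN n r" "dist n a a1 \<le> 1" "a i \<noteq> a1 i" "i \<in> {1..n}"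
  shows "a1 = a(i := a1 i)"
proof
  fix k show "a1 k = (a(i := a1 i)) k"
  proof (cases "k = i")
    case False
    show ?thesis
    proof (rule ccontr)
      assume "a1 k \<noteq> (a(i := a1 i)) k"
      hence ne: "a k \<noteq> a1 k" using False by auto
      have "k \<in> {1..n}" using ne grid_out[OF assms(1)] grid_out[OF assms(2)] by metis
      hence "{i, k} \<subseteq> {j\<in>{1..n}. a j \<noteq> a1 j}" using ne assms by auto
      hence "card {i,k} \<le> dist n a a1" unfolding dist_def by (intro card_mono) auto
      thus False using False assms(3) by simp
    qed
  qed simp
qed

lemma dist2:
  assumes "a \<in> gridN n r" "a1 \<in> gridN n r" "a \<noteq> a1" "dist n a a1 \<le> 1" "a1 i = a i" "i \<in> {1..n}" "v \<noteq> a i"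
  shows "dist n a (a1(i := v)) = 2"
proof -
  let ?D = "{j\<in>{1..n}. a j \<noteq> a1 j}"
  obtain k where k: "a k \<noteq> a1 k" using assms(3) by blast
  have "k \<in> {1..n}" using k grid_out[OF assms(1)] grid_out[OF assms(2)] by metis
  hence "?D \<noteq> {}" using k by blast
  moreover have "card ?D \<le> 1" using assms(4) unfolding dist_def .
  moreover have "finite ?D" by auto
  ultimately have cD: "card ?D = 1"
    by (metis card_0_eq le_antisym less_one not_le)
  have eq: "{j\<in>{1..n}. a j \<noteq> (a1(i := v)) j} = insert i ?D" using assms(5,6,7) by auto
  have "i \<notin> ?D" using assms(5) by auto
  hence "card (insert i ?D) = 2" using cD by simp
  thus ?thesis unfolding dist_def eq .
qed

definition Rel :: "nat \<Rightarrow> pt set \<Rightarrow> pt \<Rightarrow> pt \<Rightarrow> bool" where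
  "Rel n S u v \<longleftrightarrow> u \<in> S \<and> v \<in> S \<and> dist n u v \<le> 1"

lemma Rel_sym_rt: "(Rel n S)\<^sup>*\<^sup>* a b \<Longrightarrow> (Rel n S)\<^sup>*\<^sup>* b a"
proof (induction rule: rtranclp_induct)
  case base then show ?case by simp
next
  case (step y z)
  have "Rel n S z y" using step(2) by (auto simp: Rel_def dist_sym)
  then show ?case using step(3) by (meson converse_rtranclp_into_rtranclp)
qed

lemma Rel_S: "(Rel n S)\<^sup>*\<^sup>* a b \<Longrightarrow> a \<in> S \<Longrightarrow> b \<in> S"
  by (induction rule: rtranclp_induct) (auto simp: Rel_def)

lemma L1:
  assumes sw: "switchable n r t S" and t: "t \<le> n"
    and path: "(Rel n S)\<^sup>*\<^sup>* a b" and aS: "a \<in> S" and i: "i \<in> {1..t}"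
  shows "a(i := b i) \<in> S"
  using path aS
proof (induction rule: converse_rtranclp_induct)
  case base then show ?case by simp
next
  case (step a a1)
  have SN: "S \<subseteq> gridN n r" using sw by (simp add: switchable_def)
  have a1S: "a1 \<in> S" and d: "dist n a a1 \<le> 1" and aS: "a \<in> S" using step(1) by (auto simp: Rel_def)
  have IH: "a1(i := b i) \<in> S" using step.IH a1S by (simp add: fun_upd_def)
  have iN: "i \<in> {1..n}" using i t by auto
  show ?case
  proof (cases "a i = b i")
    case True then show ?thesis using aS by (simp add: fun_upd_idem)
  next
    case ne: False
    show ?thesis
    proof (cases "a1 i = a i")
      case False
      have "a1 = a(i := a1 i)" using dist1_eq[of a n r a1 i] SN aS a1S d False iN by auto
      hence "a(i := b i) = a1(i := b i)" by (metis fun_upd_upd)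
      then show ?thesis using IH by (simp only:)
    next
      case True
      show ?thesis
      proof (cases "a = a1")
        case True then show ?thesis using IH by (simp only:)
      next
        case False
        have "dist n a (a1(i := b i)) = 2"
          using dist2[of a n r a1 i "b i"] SN aS a1S d True False iN ne by auto
        hence "sw i a (a1(i := b i)) \<in> S" using sw aS IH i by (auto simp: switchable_def)
        then show ?thesis by (simp add: sw_def fun_upd_def)
      qed
    qed
  qed
qed




lemma polyR_var: "a \<in> N \<Longrightarrow> (var a :: 'k::field mpoly) \<in> polyR N"
  by (simp add: polyR_def var_def)

lemma polyR_mult: "p \<in> polyR N \<Longrightarrow> q \<in> polyR N \<Longrightarrow> p * q \<in> polyR N"
  unfolding polyR_def
proof safe
  fix m x assume p: "\<forall>m\<in>Poly_Mapping.keys p. Poly_Mapping.keys m \<subseteq> N"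
    and q: "\<forall>m\<in>Poly_Mapping.keys q. Poly_Mapping.keys m \<subseteq> N"
    and m: "m \<in> Poly_Mapping.keys (p * q)" and x: "x \<in> Poly_Mapping.keys m"
  obtain m1 m2 where "m = m1 + m2" "m1 \<in> Poly_Mapping.keys p" "m2 \<in> Poly_Mapping.keys q"
    using keys_mult[of p q] m by blast
  then show "x \<in> N" using p q x keys_add_nat[of m1 m2] by auto
qed

lemma polyR_diff: "p \<in> polyR N \<Longrightarrow> q \<in> polyR N \<Longrightarrow> p - q \<in> polyR N"
  unfolding polyR_def using keys_diff[of p q] by blast

lemma polyR_m1: "(-1 :: 'k::field mpoly) \<in> polyR N"
  unfolding polyR_def by simp

lemma ideal_mult: "is_ideal C Q \<Longrightarrow> c \<in> C \<Longrightarrow> x \<in> Q \<Longrightarrow> c * x \<in> Q"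
  by (simp add: is_ideal_def)

lemma ideal_add: "is_ideal C Q \<Longrightarrow> x \<in> Q \<Longrightarrow> y \<in> Q \<Longrightarrow> x + y \<in> Q"
  by (simp add: is_ideal_def)

lemma gen_ideal_least: "is_ideal C J \<Longrightarrow> G \<subseteq> J \<Longrightarrow> gen_ideal C G \<subseteq> J"
  unfolding gen_ideal_def by blast

lemma gen_ideal_gen: "G \<subseteq> gen_ideal C G"
  unfolding gen_ideal_def by blast

lemma fpol_polyR:
  "a \<in> gridN n r \<Longrightarrow> b \<in> gridN n r \<Longrightarrow> i \<in> {1..n} \<Longrightarrow> (fpol i a b :: 'k::field mpoly) \<in> polyR (gridN n r)"
  unfolding fpol_def sw_def
  by (intro polyR_diff polyR_mult polyR_var; (assumption | rule grid_upd; assumption))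

lemma step_non_i:
  fixes Q :: "'k::field mpoly set"
  assumes Q: "is_ideal (polyR (gridN n r)) Q" and IQ: "It n r t \<subseteq> Q"
    and canc: "\<forall>c\<in>S. \<forall>g\<in>polyR (gridN n r). var c * g \<in> Q \<longrightarrow> g \<in> Q"
    and SN: "S \<subseteq> gridN n r" and t: "t \<le> n" and i: "i \<in> {1..t}"
    and a: "a \<in> gridN n r" and a1: "a1 \<in> S" and b: "b \<in> gridN n r"
    and d: "dist n a a1 \<le> 1" and ai: "a1 i = a i" and f1: "fpol i a1 b \<in> Q"
  shows "fpol i a b \<in> Q"
proof -
  have iN: "i \<in> {1..n}" using i t by auto
  have a1N: "a1 \<in> gridN n r" using a1 SN by auto
  show ?thesis
  proof (cases "a = a1 \<or> a i = b i")
    case True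
    then show ?thesis
    proof
      assume "a = a1" then show ?thesis using f1 by simp
    next
      assume "a i = b i"
      hence "fpol i a b = (0 :: 'k mpoly)" by (simp add: fpol_def sw_def fun_upd_idem mult.commute)
      then show ?thesis using Q by (simp add: is_ideal_def)
    qed
  next
    case False
    let ?p1 = "a1(i := b i)" and ?q = "b(i := a i)" and ?p = "a(i := b i)"
    have p1N: "?p1 \<in> gridN n r" by (rule grid_upd[OF a1N b iN])
    have qN: "?q \<in> gridN n r" by (rule grid_upd[OF b a iN])
    have "dist n a ?p1 = 2" using dist2[of a n r a1 i "b i"] a a1N False d ai iN by auto
    hence "fpol i a ?p1 \<in> {fpol i a b | i a b. a \<in> gridN n r \<and> b \<in> gridN n r \<and> dist n a b = 2 \<and> i \<in> {1..t}}"
      using a p1N i by blast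
    hence "fpol i a ?p1 \<in> It n r t" unfolding It_def
      by (rule subsetD[OF gen_ideal_gen])
    hence f2: "fpol i a ?p1 \<in> Q" using IQ by blast
    have e1: "b(i := a1 i) = ?q" using ai by simp
    have e2: "?p1(i := a i) = a1" using ai by auto
    have e3: "a(i := ?p1 i) = ?p" by simp
    have iden: "var a1 * fpol i a b = var a * fpol i a1 b + var ?q * fpol i a ?p1"
      unfolding fpol_def sw_def e1 e2 e3 by (simp add: algebra_simps)
    have "var a1 * fpol i a b \<in> Q"
      unfolding iden
      by (intro ideal_add[OF Q] ideal_mult[OF Q] polyR_var f1 f2 a qN)
    then show ?thesis using canc a1 fpol_polyR[OF a b iN] by (meson)
  qed
qed




definition RelI :: "nat \<Rightarrow> pt set \<Rightarrow> nat \<Rightarrow> pt \<Rightarrow> pt \<Rightarrow> bool" where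
  "RelI n S i u v \<longleftrightarrow> Rel n S u v \<and> u i = v i"

lemma slice:
  fixes Q :: "'k::field mpoly set"
  assumes Q: "is_ideal (polyR (gridN n r)) Q" and IQ: "It n r t \<subseteq> Q"
    and canc: "\<forall>c\<in>S. \<forall>g\<in>polyR (gridN n r). var c * g \<in> Q \<longrightarrow> g \<in> Q"
    and SN: "S \<subseteq> gridN n r" and t: "t \<le> n" and i: "i \<in> {1..t}"
    and b: "b \<in> gridN n r" and qb: "q(i := b i) = b"
    and path: "(RelI n S i)\<^sup>*\<^sup>* c q" 
  shows "fpol i c b \<in> Q"
  using path
proof (induction rule: converse_rtranclp_induct)
  case base
  have "b(i := q i) = q" using qb by (metis fun_upd_triv fun_upd_upd)
  hence "fpol i q b = (0::'k mpoly)" using qb by (simp add: fpol_def sw_def mult.commute)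
  then show ?case using Q by (simp add: is_ideal_def)
next
  case (step c c1)
  have c1: "c1 \<in> S" "c \<in> S" "dist n c c1 \<le> 1" "c1 i = c i" using step(1) by (auto simp: RelI_def Rel_def)
  show ?case
    by (rule step_non_i[OF Q IQ canc SN t i _ c1(1) b c1(3) c1(4) step.IH]) (use c1 SN in auto)
qed

lemma toslice:
  assumes sw: "switchable n r t S" and t: "t \<le> n" and i: "i \<in> {1..t}"
    and path: "(Rel n S)\<^sup>*\<^sup>* a c" and aS: "a \<in> S"
  shows "(RelI n S i)\<^sup>*\<^sup>* a (c(i := a i))"
  using path
proof (induction rule: rtranclp_induct)
  case base then show ?case by simp
next
  case (step c d)
  have dS: "d \<in> S" and cS: "c \<in> S" and dd: "dist n c d \<le> 1" using step(2) by (auto simp: Rel_def)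
  have "(Rel n S)\<^sup>*\<^sup>* c a" using Rel_sym_rt step(1) by blast
  hence c': "c(i := a i) \<in> S" using L1[OF sw t _ cS i] by blast
  have "(Rel n S)\<^sup>*\<^sup>* d a" using Rel_sym_rt step(1) step(2) by (meson rtranclp.rtrancl_into_rtrancl)
  hence d': "d(i := a i) \<in> S" using L1[OF sw t _ dS i] by blast
  have "dist n (c(i := a i)) (d(i := a i)) \<le> dist n c d"
    unfolding dist_def by (rule card_mono) auto
  hence "RelI n S i (c(i := a i)) (d(i := a i))" using c' d' dd by (auto simp: RelI_def Rel_def)
  then show ?case using step(3) by (meson rtranclp.rtrancl_into_rtrancl)
qed

lemma Rel_eq: "Rel n S = (\<lambda>u v. u \<in> S \<and> v \<in> S \<and> dist n u v \<le> 1)"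
  by (auto simp: Rel_def fun_eq_iff)

lemma main_fpol:
  fixes Q :: "'k::field mpoly set"
  assumes Q: "is_ideal (polyR (gridN n r)) Q" and IQ: "It n r t \<subseteq> Q"
    and canc: "\<forall>c\<in>S. \<forall>g\<in>polyR (gridN n r). var c * g \<in> Q \<longrightarrow> g \<in> Q"
    and sw: "switchable n r t S" and t: "t \<le> n" and i: "i \<in> {1..t}"
    and con: "connected_in n S a b"
  shows "fpol i a b \<in> Q"
proof -
  have SN: "S \<subseteq> gridN n r" using sw by (simp add: switchable_def)
  have aS: "a \<in> S" and p: "(Rel n S)\<^sup>*\<^sup>* a b" using con by (auto simp: connected_in_def Rel_eq)
  have bS: "b \<in> S" using Rel_S[OF p aS] .
  have sl: "(RelI n S i)\<^sup>*\<^sup>* a (b(i := a i))" using toslice[OF sw t i p aS] .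
  show ?thesis
    by (rule slice[OF Q IQ canc SN t i _ _ sl]) (use bS SN in auto)
qed

lemma var_single: "var a = Poly_Mapping.single (Poly_Mapping.single a 1) 1"
  by (simp add: var_def)

lemma ev_var: "ev S (var a :: 'k::field mpoly) = (if a \<in> S then 1 else 0)"
  by (simp add: var_def ev_single)

lemma var_notin_PS:
  fixes k :: "'k::field itself"
  assumes sw: "switchable n r t S" and t: "t \<le> n" and cS: "c \<in> S"
  shows "(var c :: 'k mpoly) \<notin> PS n r t S"
proof -
  let ?C = "polyR (gridN n r) :: 'k mpoly set"
  let ?Z = "{g \<in> ?C. ev S g = 0}"
  have SN: "S \<subseteq> gridN n r" using sw by (simp add: switchable_def)
  have Z: "is_ideal ?C ?Z"
    unfolding is_ideal_def
  proof (intro conjI ballI)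
    show "?Z \<subseteq> ?C" by blast
    show "0 \<in> ?Z" by (simp add: ev_zero polyR_def)
    fix x y assume "x \<in> ?Z" "y \<in> ?Z"
    then show "x + y \<in> ?Z"
      using polyR_diff[of x _ "-y"] by (auto simp: ev_add polyR_def dest: subsetD[OF keys_add])
  next
    fix c x assume "c \<in> ?C" "x \<in> ?Z"
    then show "c * x \<in> ?Z" by (auto simp: ev_mult polyR_mult)
  qed
  have "VarS n r S \<subseteq> ?Z"
    unfolding VarS_def
    by (rule gen_ideal_least[OF Z]) (auto simp: ev_var polyR_var)
  moreover have "Itilde n r t S \<subseteq> ?Z"
    unfolding Itilde_def
  proof (rule gen_ideal_least[OF Z], safe)
    fix i a b assume i: "i \<in> {1..t}" and con: "connected_in n S a b"
    have aS: "a \<in> S" and p: "(Rel n S)\<^sup>*\<^sup>* a b" using con by (auto simp: connected_in_def Rel_eq)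
    have bS: "b \<in> S" using Rel_S[OF p aS] .
    have pS: "a(i := b i) \<in> S" using L1[OF sw t p aS i] .
    have qS: "b(i := a i) \<in> S" using L1[OF sw t Rel_sym_rt[OF p] bS i] .
    show "fpol i a b \<in> ?C" using fpol_polyR aS bS SN i t by (meson atLeastAtMost_iff subsetD order_trans)
    show "ev S (fpol i a b :: 'k mpoly) = 0"
      using aS bS pS qS by (simp add: fpol_def sw_def ev_minus ev_mult ev_var)
  qed
  ultimately have "PS n r t S \<subseteq> ?Z"
    unfolding PS_def ideal_sum_def by (intro gen_ideal_least[OF Z]) auto
  moreover have "ev S (var c :: 'k mpoly) \<noteq> 0" using cS by (simp add: ev_var)
  ultimately show ?thesis by blast
qed


theorem corollary4p14:
  fixes n t :: nat and r :: "nat \<Rightarrow> nat" and S :: "pt set"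
    and Qs :: "('k::field) mpoly set set"
  assumes "n \<ge> 1" and "\<forall>i\<in>{1..n}. r i \<ge> 1"
    and "t \<in> {1..n}"
    and "switchable n r t S"
    and "associated_prime (polyR (gridN n r)) (It n r t) (PS n r t S :: 'k mpoly set)"
    and "primary_decomposition (polyR (gridN n r)) (It n r t) Qs"
  shows "\<forall>Q\<in>Qs. radical (polyR (gridN n r)) Q = PS n r t S \<longrightarrow> Itilde n r t S \<subseteq> Q"
proof (intro ballI impI)
  fix Q assume QQs: "Q \<in> Qs" and rad: "radical (polyR (gridN n r)) Q = PS n r t S"
  have sw: "switchable n r t S" using assms(4) .
  have t: "t \<le> n" using assms(3) by simp
  have SN: "S \<subseteq> gridN n r" using sw by (simp add: switchable_def)
  have prim: "is_primary_ideal (polyR (gridN n r)) Q"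
    using assms(6) QQs by (simp add: primary_decomposition_def)
  hence Q: "is_ideal (polyR (gridN n r)) Q" by (simp add: is_primary_ideal_def)
  have IQ: "It n r t \<subseteq> Q" using assms(6) QQs by (auto simp: primary_decomposition_def)
  have canc: "\<forall>c\<in>S. \<forall>g\<in>polyR (gridN n r). var c * g \<in> Q \<longrightarrow> g \<in> Q"
  proof (intro ballI impI)
    fix c g assume cS: "c \<in> S" and g: "g \<in> polyR (gridN n r)" and cg: "var c * g \<in> Q"
    show "g \<in> Q"
    proof (rule ccontr)
      assume gQ: "g \<notin> Q"
      have vc: "(var c :: 'k mpoly) \<in> polyR (gridN n r)" using polyR_var cS SN by blast
      have "g * var c \<in> Q" using cg by (simp add: mult.commute)
      then obtain k where "var c ^ k \<in> Q"
        using prim g vc gQ unfolding is_primary_ideal_def by blast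
      hence "var c \<in> radical (polyR (gridN n r)) Q" using vc by (auto simp: radical_def)
      moreover have "(var c :: 'k mpoly) \<notin> PS n r t S" by (rule var_notin_PS[OF sw t cS])
      ultimately show False using rad by simp
    qed
  qed
  show "Itilde n r t S \<subseteq> Q"
    unfolding Itilde_def
    by (rule gen_ideal_least[OF Q]) (auto intro: main_fpol[OF Q IQ canc sw t])
qed

end
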